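(* Consider the linearized equation $\mathbf{M}\ddot{\mathbf{x}}+\mathbf{G}\mathbf{x}=\mathbf{B}u$, $\mathbf{x}=[\delta x;\mathbf{x}_q]\in\mathbb{R}^{2n+2}$, $u\in\mathbb{R}^2$, of the chain pendulum on a cart about the equilibrium specified by $s=(s_1,\dots,s_n)\in\{1,-1\}^n$ and $x=0$, with the matrices defined in the context. Suppose that $\mathbf{M}$ is positive-definite. Then this linearized system is controllable if and only if the subsystem \[ \mathbf{M}_{qq}\ddot{\mathbf{x}}_q+\mathbf{G}_{qq}\mathbf{x}_q=\mathbf{M}_{qx}\mathbf{u} \] with control input $\mathbf{u}\in\mathbb{R}^2$ is controllable, or equivalently, if and only if \[ \mathrm{rank}\big[\lambda^2\mathbf{M}_{qq}+\mathbf{G}_{qq},\ \mathbf{M}_{qx}\big]=2n\quad\text{for every }\lambda\in\mathbb{C}. \]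
   Context: Let $n\ge1$, $e_1,e_2,e_3$ the standard basis of $\mathbb{R}^3$ ($e_3$ the direction of gravity), $g>0$, $C=[e_1,e_2]\in\mathbb{R}^{3\times2}$, and $\hat y$ the skew-symmetric matrix with $\hat yz=y\times z$. The system is a cart of mass $m>0$ with planar position $x\in\mathbb{R}^2$, driven by a horizontal force $u\in\mathbb{R}^2$, carrying a serial chain of $n$ links with spherical joints; link $i$ has length $l_i>0$, unit direction $q_i\in\mathsf{S}^2\subset\mathbb{R}^3$, and point mass $m_i>0$ at its outboard end. Define $M_{00}=m+\sum_{i=1}^n m_i$, $M_{0i}=\big(\sum_{a=i}^n m_a\big)l_iC^T\in\mathbb{R}^{2\times3}$, $M_{ij}=\big(\sum_{a=\max\{i,j\}}^n m_a\big)l_il_j$. An equilibrium is given by $q_i=s_ie_3$ with $s_i\in\{1,-1\}$, zero velocities, and $x=0$. Its linearization (with perturbations $x=\epsilon\delta x$, $q_i=\exp(\epsilon\hat\xi_i)s_ie_3$, $\xi_i\cdot e_3=0$, $\mathbf{x}_q=[C^T\xi_1;\dots;C^T\xi_n]\in\mathbb{R}^{2n}$) is $\mathbf{M}\ddot{\mathbf{x}}+\mathbf{G}\mathbf{x}=\mathbf{B}u$ with $\mathbf{M}=\begin{bmatrix}\mathbf{M}_{xx}&\mathbf{M}_{xq}\\\mathbf{M}_{qx}&\mathbf{M}_{qq}\end{bmatrix}$, $\mathbf{G}=\begin{bmatrix}0_2&0\\0&\mathbf{G}_{qq}\end{bmatrix}$, $\mathbf{B}=\begin{bmatrix}I_2\\0_{2n\times2}\end{bmatrix}$,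 where $\mathbf{M}_{xx}=M_{00}I_2$, $\mathbf{M}_{xq}=[-s_1M_{01}\hat e_3C,\dots,-s_nM_{0n}\hat e_3C]\in\mathbb{R}^{2\times2n}$, $\mathbf{M}_{qx}=\mathbf{M}_{xq}^T$, $\mathbf{M}_{qq}$ is the $2n\times2n$ block matrix with $(i,j)$ block $s_is_jM_{ij}I_2$, and $\mathbf{G}_{qq}=\mathrm{diag}\big[s_i\big(\sum_{a=i}^n m_a\big)g\,l_iI_2\big]_{i=1}^n$. Controllability refers to the standard notion for the linear system in first-order form with state $(\mathbf{x},\dot{\mathbf{x}})$. *)

theory Defs
  imports "Jordan_Normal_Form.DL_Rank"
begin

definition mrank :: "'a::field mat \<Rightarrow> nat" where
  "mrank A = vec_space.rank (dim_row A) A"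

definition hcat :: "'a::zero mat \<Rightarrow> 'a mat \<Rightarrow> 'a mat" where
  "hcat A B = mat (dim_row A) (dim_col A + dim_col B)
     (\<lambda>(i,j). if j < dim_col A then A $$ (i,j) else B $$ (i, j - dim_col A))"

definition vcat :: "'a::zero mat \<Rightarrow> 'a mat \<Rightarrow> 'a mat" where
  "vcat A B = mat (dim_row A + dim_row B) (dim_col A)
     (\<lambda>(i,j). if i < dim_row A then A $$ (i,j) else B $$ (i - dim_row A, j))"

definition ctrb_mat :: "'a::field mat \<Rightarrow> 'a mat \<Rightarrow> 'a mat" where
  "ctrb_mat A B = (let N = dim_row A; p = dim_col B in
     mat N (N * p) (\<lambda>(i,j). ((A ^\<^sub>m (j div p)) * B) $$ (i, j mod p)))"

definition controllable :: "'a::field mat \<Rightarrow> 'a mat \<Rightarrow> bool" where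
  "controllable A B \<longleftrightarrow> mrank (ctrb_mat A B) = dim_row A"

definition minv :: "'a::field mat \<Rightarrow> 'a mat" where
  "minv A = (SOME X. X \<in> carrier_mat (dim_row A) (dim_row A) \<and>
                     A * X = 1\<^sub>m (dim_row A) \<and> X * A = 1\<^sub>m (dim_row A))"

text \<open>Second-order system  Mm x'' + Gm x = Bm u,  put into first-order form with
  state (x, x'):  A = [0, I; -Mm^-1 Gm, 0],  B = [0; Mm^-1 Bm].\<close>
definition so_controllable :: "real mat \<Rightarrow> real mat \<Rightarrow> real mat \<Rightarrow> bool" where
  "so_controllable Mm Gm Bm = (let N = dim_row Mm in
     controllable
       (four_block_mat (0\<^sub>m N N) (1\<^sub>m N) (- (minv Mm * Gm)) (0\<^sub>m N N))
       (vcat (0\<^sub>m N (dim_col Bm)) (minv Mm * Bm)))"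

definition pos_def :: "real mat \<Rightarrow> bool" where
  "pos_def A \<longleftrightarrow> A \<in> carrier_mat (dim_row A) (dim_row A) \<and> transpose_mat A = A \<and>
     (\<forall>v \<in> carrier_vec (dim_row A). v \<noteq> 0\<^sub>v (dim_row A) \<longrightarrow> v \<bullet> (A *\<^sub>v v) > 0)"

text \<open>Skew matrix hat y (hat y z = y \<times> z), basis vector e3 and C = [e1, e2].\<close>
definition hat :: "real vec \<Rightarrow> real mat" where
  "hat y = mat_of_rows_list 3 [[0, - y $ 2, y $ 1], [y $ 2, 0, - y $ 0], [- y $ 1, y $ 0, 0]]"

definition e3 :: "real vec" where "e3 = unit_vec 3 2"

definition Cmat :: "real mat" where
  "Cmat = mat 3 2 (\<lambda>(i,j). if i = j then 1 else 0)"

text \<open>Masses mm 1..mm n, lengths l 1..l n, signs s 1..s n, cart mass m.\<close>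
definition msum :: "nat \<Rightarrow> (nat \<Rightarrow> real) \<Rightarrow> nat \<Rightarrow> real" where
  "msum n mm i = (\<Sum>a = i..n. mm a)"

definition M00 :: "nat \<Rightarrow> real \<Rightarrow> (nat \<Rightarrow> real) \<Rightarrow> real" where
  "M00 n m mm = m + (\<Sum>i = 1..n. mm i)"

definition M0 :: "nat \<Rightarrow> (nat \<Rightarrow> real) \<Rightarrow> (nat \<Rightarrow> real) \<Rightarrow> nat \<Rightarrow> real mat" where
  "M0 n mm l i = (msum n mm i * l i) \<cdot>\<^sub>m transpose_mat Cmat"

definition Mij :: "nat \<Rightarrow> (nat \<Rightarrow> real) \<Rightarrow> (nat \<Rightarrow> real) \<Rightarrow> nat \<Rightarrow> nat \<Rightarrow> real" where
  "Mij n mm l i j = msum n mm (max i j) * l i * l j"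

text \<open>Coordinates of x_q: link i (1-based) occupies the indices 2(i-1), 2(i-1)+1.\<close>
definition Mxx :: "nat \<Rightarrow> real \<Rightarrow> (nat \<Rightarrow> real) \<Rightarrow> real mat" where
  "Mxx n m mm = M00 n m mm \<cdot>\<^sub>m 1\<^sub>m 2"

definition Mxq_blk :: "nat \<Rightarrow> (nat \<Rightarrow> real) \<Rightarrow> (nat \<Rightarrow> real) \<Rightarrow> (nat \<Rightarrow> real) \<Rightarrow> nat \<Rightarrow> real mat" where
  "Mxq_blk n mm l s i = (- s i) \<cdot>\<^sub>m (M0 n mm l i * hat e3 * Cmat)"

definition Mxq :: "nat \<Rightarrow> (nat \<Rightarrow> real) \<Rightarrow> (nat \<Rightarrow> real) \<Rightarrow> (nat \<Rightarrow> real) \<Rightarrow> real mat" where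
  "Mxq n mm l s = mat 2 (2 * n) (\<lambda>(r,k). Mxq_blk n mm l s (k div 2 + 1) $$ (r, k mod 2))"

definition Mqx :: "nat \<Rightarrow> (nat \<Rightarrow> real) \<Rightarrow> (nat \<Rightarrow> real) \<Rightarrow> (nat \<Rightarrow> real) \<Rightarrow> real mat" where
  "Mqx n mm l s = transpose_mat (Mxq n mm l s)"

definition Mqq :: "nat \<Rightarrow> (nat \<Rightarrow> real) \<Rightarrow> (nat \<Rightarrow> real) \<Rightarrow> (nat \<Rightarrow> real) \<Rightarrow> real mat" where
  "Mqq n mm l s = mat (2 * n) (2 * n) (\<lambda>(r,c).
     s (r div 2 + 1) * s (c div 2 + 1) * Mij n mm l (r div 2 + 1) (c div 2 + 1) *
     (if r mod 2 = c mod 2 then 1 else 0))"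

definition Gqq :: "nat \<Rightarrow> (nat \<Rightarrow> real) \<Rightarrow> (nat \<Rightarrow> real) \<Rightarrow> (nat \<Rightarrow> real) \<Rightarrow> real \<Rightarrow> real mat" where
  "Gqq n mm l s g = mat (2 * n) (2 * n) (\<lambda>(r,c).
     if r = c then s (r div 2 + 1) * msum n mm (r div 2 + 1) * g * l (r div 2 + 1) else 0)"

definition Mlin :: "nat \<Rightarrow> real \<Rightarrow> (nat \<Rightarrow> real) \<Rightarrow> (nat \<Rightarrow> real) \<Rightarrow> (nat \<Rightarrow> real) \<Rightarrow> real mat" where
  "Mlin n m mm l s = four_block_mat (Mxx n m mm) (Mxq n mm l s) (Mqx n mm l s) (Mqq n mm l s)"

definition Glin :: "nat \<Rightarrow> (nat \<Rightarrow> real) \<Rightarrow> (nat \<Rightarrow> real) \<Rightarrow> (nat \<Rightarrow> real) \<Rightarrow> real \<Rightarrow> real mat" where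
  "Glin n mm l s g = four_block_mat (0\<^sub>m 2 2) (0\<^sub>m 2 (2 * n)) (0\<^sub>m (2 * n) 2) (Gqq n mm l s g)"

definition Blin :: "nat \<Rightarrow> real mat" where
  "Blin n = vcat (1\<^sub>m 2) (0\<^sub>m (2 * n) 2)"

end

theory Submission
  imports Defs "Jordan_Normal_Form.Char_Poly"
begin

definition LK :: "'a::field mat \<Rightarrow> bool" where
  "LK X \<longleftrightarrow> (\<forall>w \<in> carrier_vec (dim_row X). transpose_mat X *\<^sub>v w = 0\<^sub>v (dim_col X) \<longrightarrow> w = 0\<^sub>v (dim_row X))"

lemma wide_kernel:
  fixes F :: "'a::field mat"
  assumes F: "F \<in> carrier_mat N K" and NK: "N < K"
  shows "\<exists>c \<in> carrier_vec K. c \<noteq> 0\<^sub>v K \<and> F *\<^sub>v c = 0\<^sub>v N"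
proof -
  define c where "c = (\<lambda>i. if i < N then vec K (\<lambda>j. F $$ (i,j)) else 0\<^sub>v K)"
  define Z where "Z = mat\<^sub>r K K (\<lambda>i. if i = K - 1 then 0\<^sub>v K else c i)"
  have cc: "c \<in> {0..<K} \<rightarrow> carrier_vec K" unfolding c_def by auto
  have "det Z = 0" unfolding Z_def by (rule det_row_0[OF _ cc], use NK in auto)
  moreover have Zc: "Z \<in> carrier_mat K K" unfolding Z_def by auto
  ultimately obtain v where v: "v \<in> carrier_vec K" "v \<noteq> 0\<^sub>v K" "Z *\<^sub>v v = 0\<^sub>v K"
    using det_0_iff_vec_prod_zero_field by blast
  have "F *\<^sub>v v = 0\<^sub>v N"
  proof (rule eq_vecI)
    fix i assume i: "i < dim_vec (0\<^sub>v N :: 'a vec)"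
    then have iN: "i < N" by simp
    have "(Z *\<^sub>v v) $ i = 0" using v(3) iN NK by simp
    moreover have "(Z *\<^sub>v v) $ i = (F *\<^sub>v v) $ i"
      using iN NK F v(1) unfolding Z_def c_def
      by (simp add: mult_mat_vec_def scalar_prod_def row_def)
    ultimately show "(F *\<^sub>v v) $ i = 0\<^sub>v N $ i" using iN by simp
  qed (use F in simp)
  then show ?thesis using v by blast
qed

lemma rank_full_iff_LK:
  fixes X :: "'a::field mat"
  assumes X: "X \<in> carrier_mat N c"
  shows "mrank X = N \<longleftrightarrow> LK X"
proof -
  interpret vec_space "TYPE('a)" N .
  define S where "S = set (cols X)"
  have SC: "S \<subseteq> carrier_vec N" unfolding S_def using X cols_dim by blast
  have "lin_indpt {}" by (simp add: lin_dep_def)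
  then obtain U where U: "finite U" "maximal U (\<lambda>T. T \<subseteq> S \<and> lin_indpt T)"
    using maximal_exists_superset[of S "\<lambda>T. T \<subseteq> S \<and> lin_indpt T" "{}"] unfolding S_def by blast
  have US: "U \<subseteq> S" and Uli: "lin_indpt U" using U(2) unfolding maximal_def by auto
  have UC: "U \<subseteq> carrier_vec N" using US SC by auto
  have rk: "mrank X = card U" unfolding mrank_def using X U(2) rank_card_indpt[OF X] unfolding S_def by simp
  have cardU: "card U \<le> N" using li_le_dim(2)[OF fin_dim _ Uli] UC dim_is_n by simp
  have SU: "S \<subseteq> span U"
  proof
    fix s assume s: "s \<in> S"
    show "s \<in> span U"
    proof (rule ccontr)
      assume ns: "s \<notin> span U"
      then have "s \<notin> U" using in_own_span[OF UC] by auto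
      then have "lin_indpt (U \<union> {s})" using lin_dep_iff_in_span[OF UC Uli] ns s SC by auto
      then have "U \<union> {s} \<subseteq> S \<and> lin_indpt (U \<union> {s})" using US s by auto
      then have "U \<union> {s} = U" using U(2) unfolding maximal_def by blast
      then show False using \<open>s \<notin> U\<close> by auto
    qed
  qed
  have colprod: "(transpose_mat X *\<^sub>v w) $ j = col X j \<bullet> w" if "j < c" for w j
    using X that by simp
  have LKiff: "LK X \<longleftrightarrow> (\<forall>w \<in> carrier_vec N. (\<forall>s\<in>S. w \<bullet> s = 0) \<longrightarrow> w = 0\<^sub>v N)"
  proof -
    have "transpose_mat X *\<^sub>v w = 0\<^sub>v c \<longleftrightarrow> (\<forall>s\<in>S. w \<bullet> s = 0)" if w: "w \<in> carrier_vec N" for w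
    proof -
      have "transpose_mat X *\<^sub>v w = 0\<^sub>v c \<longleftrightarrow> (\<forall>j<c. col X j \<bullet> w = 0)"
        using X colprod by (auto simp: vec_eq_iff)
      also have "\<dots> \<longleftrightarrow> (\<forall>s\<in>S. w \<bullet> s = 0)"
        unfolding S_def using X w comm_scalar_prod[OF w] col_dim
        by (auto simp: cols_def)
      finally show ?thesis .
    qed
    then show ?thesis unfolding LK_def using X by auto
  qed
  show ?thesis
  proof
    assume "mrank X = N"
    then have cU: "card U = N" using rk by simp
    have "basis U" using dim_li_is_basis[OF fin_dim U(1) UC Uli] cU dim_is_n by simp
    then have spanU: "span U = carrier_vec N" unfolding basis_def by simp
    show "LK X" unfolding LKiff
    proof (intro ballI impI)
      fix w :: "'a vec" assume w: "w \<in> carrier_vec N" and o: "\<forall>s\<in>S. w \<bullet> s = 0"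
      have "w \<in> orthogonal_complement U" using o US w unfolding orthogonal_complement_def by auto
      then have "w \<in> orthogonal_complement (span U)" using UC by simp
      then have o2: "\<forall>y\<in>carrier_vec N. w \<bullet> y = 0"
        using spanU unfolding orthogonal_complement_def by simp
      have "w $ i = 0" if "i < N" for i
      proof -
        have "w \<bullet> unit_vec N i = 0" using o2 by simp
        then show ?thesis using that w by simp
      qed
      then show "w = 0\<^sub>v N" using w by (intro eq_vecI) auto
    qed
  next
    assume lk: "LK X"
    show "mrank X = N"
    proof (rule ccontr)
      assume "mrank X \<noteq> N"
      then have lt: "card U < N" using rk cardU by simp
      obtain us where us: "set us = U" "distinct us" using finite_distinct_list[OF U(1)] by blast
      have len: "length us = card U" using us distinct_card by fastforce
      define F where "F = mat (length us) N (\<lambda>(i,j). (us ! i) $ j)"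
      have Fc: "F \<in> carrier_mat (card U) N" unfolding F_def len by simp
      obtain v where v: "v \<in> carrier_vec N" "v \<noteq> 0\<^sub>v N" "F *\<^sub>v v = 0\<^sub>v (card U)"
        using wide_kernel[OF Fc lt] by blast
      have "v \<bullet> u = 0" if u: "u \<in> U" for u
      proof -
        obtain i where i: "i < length us" "us ! i = u" using u us(1) by (metis in_set_conv_nth)
        have uc: "u \<in> carrier_vec N" using u UC by auto
        have "(F *\<^sub>v v) $ i = u \<bullet> v" using i uc v(1) unfolding F_def
          by (simp add: scalar_prod_def row_def)
        then show ?thesis using v(3) i len comm_scalar_prod[OF uc v(1)] by simp
      qed
      then have "v \<in> orthogonal_complement U" using v(1) unfolding orthogonal_complement_def by auto
      then have "v \<in> orthogonal_complement (span U)" using UC by simp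
      then have "\<forall>s\<in>S. v \<bullet> s = 0" using SU unfolding orthogonal_complement_def by auto
      then show False using lk v unfolding LKiff by blast
    qed
  qed
qed

lemma pow_mat_Suc_left:
  assumes A: "A \<in> carrier_mat n n"
  shows "A ^\<^sub>m Suc k = A * A ^\<^sub>m k"
proof (induction k)
  case 0 then show ?case using A by simp
next
  case (Suc k)
  have "A ^\<^sub>m Suc (Suc k) = (A * A ^\<^sub>m k) * A" using Suc by simp
  also have "\<dots> = A * (A ^\<^sub>m k * A)" using A by (simp add: assoc_mult_mat[of _ n n _ n _ n])
  finally show ?case by simp
qed

lemma dep_lemma:
  fixes v :: "nat \<Rightarrow> 'a::field vec"
  assumes vc: "\<And>j. v j \<in> carrier_vec N"
    and y: "y \<in> carrier_vec k" "y \<noteq> 0\<^sub>v k"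
    and Vy: "mat N k (\<lambda>(i,j). v j $ i) *\<^sub>v y = 0\<^sub>v N"
  shows "\<exists>K<k. \<exists>a \<in> carrier_vec K. v K = mat N K (\<lambda>(i,j). v j $ i) *\<^sub>v a"
proof -
  define J where "J = {j. j < k \<and> y $ j \<noteq> 0}"
  have "J \<noteq> {}" using y unfolding J_def by (auto simp: vec_eq_iff)
  moreover have fJ: "finite J" unfolding J_def by auto
  ultimately have KJ: "Max J \<in> J" by simp
  define K where "K = Max J"
  have Kk: "K < k" and yK: "y $ K \<noteq> 0" using KJ unfolding K_def J_def by auto
  have yz: "y $ j = 0" if "K < j" "j < k" for j
  proof (rule ccontr)
    assume "y $ j \<noteq> 0" then have "j \<in> J" using that unfolding J_def by auto
    then have "j \<le> K" unfolding K_def using fJ by simp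
    then show False using that by simp
  qed
  define a where "a = vec K (\<lambda>j. - y $ j / y $ K)"
  have "v K = mat N K (\<lambda>(i,j). v j $ i) *\<^sub>v a"
  proof (rule eq_vecI)
    fix i assume "i < dim_vec (mat N K (\<lambda>(i,j). v j $ i) *\<^sub>v a)"
    then have i: "i < N" by simp
    have "0 = (mat N k (\<lambda>(i,j). v j $ i) *\<^sub>v y) $ i" using Vy i by simp
    also have "\<dots> = (\<Sum>j<k. v j $ i * y $ j)"
      using i y(1) by (simp add: mult_mat_vec_def scalar_prod_def row_def lessThan_atLeast0 mult.commute)
    also have "\<dots> = (\<Sum>j<Suc K. v j $ i * y $ j)"
      by (rule sum.mono_neutral_right) (use Kk yz in auto)
    also have "\<dots> = (\<Sum>j<K. v j $ i * y $ j) + v K $ i * y $ K" by simp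
    finally have eq: "v K $ i * y $ K = - (\<Sum>j<K. v j $ i * y $ j)" by (simp add: eq_neg_iff_add_eq_0 add.commute)
    have "(mat N K (\<lambda>(i,j). v j $ i) *\<^sub>v a) $ i = (\<Sum>j<K. v j $ i * (- y $ j / y $ K))"
      using i unfolding a_def by (simp add: mult_mat_vec_def scalar_prod_def row_def lessThan_atLeast0 mult.commute)
    also have "\<dots> = - (\<Sum>j<K. v j $ i * y $ j) / y $ K"
      by (simp add: sum_divide_distrib sum_negf)
    also have "\<dots> = v K $ i" using eq yK by (simp add: field_simps)
    finally show "v K $ i = (mat N K (\<lambda>(i,j). v j $ i) *\<^sub>v a) $ i" by simp
  qed (use vc in simp)
  moreover have "a \<in> carrier_vec K" unfolding a_def by simp
  ultimately show ?thesis using Kk by blast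
qed

lemma hautus_hard:
  fixes M :: "complex mat"
  assumes M: "M \<in> carrier_mat N N" and Bt: "Bt \<in> carrier_mat p N"
    and w: "w \<in> carrier_vec N" "w \<noteq> 0\<^sub>v N"
    and kal: "\<forall>k<N. Bt *\<^sub>v (M ^\<^sub>m k *\<^sub>v w) = 0\<^sub>v p"
  shows "\<exists>\<mu> u. u \<in> carrier_vec N \<and> u \<noteq> 0\<^sub>v N \<and> M *\<^sub>v u = \<mu> \<cdot>\<^sub>v u \<and> Bt *\<^sub>v u = 0\<^sub>v p"
proof -
  define v where "v = (\<lambda>j. M ^\<^sub>m j *\<^sub>v w)"
  have vc: "\<And>j. v j \<in> carrier_vec N" unfolding v_def using M w by (metis mult_mat_vec_carrier pow_carrier_mat)
  have vSuc: "v (Suc j) = M *\<^sub>v v j" for j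
    unfolding v_def pow_mat_Suc_left[OF M] using M w
    by (simp add: assoc_mult_mat_vec[of _ N N _ N])
  define Vm where "Vm = (\<lambda>k. mat N k (\<lambda>(i,j). v j $ i))"
  have Vmc: "Vm k \<in> carrier_mat N k" for k unfolding Vm_def by simp
  have colVm: "col (Vm k) j = v j" if "j < k" for j k
    using that vc[of j] unfolding Vm_def by (auto simp: vec_eq_iff)
  define P where "P = (\<lambda>k. \<exists>a \<in> carrier_vec k. v k = Vm k *\<^sub>v a)"
  have dep: "\<exists>K<k. P K" if "y \<in> carrier_vec k" "y \<noteq> 0\<^sub>v k" "Vm k *\<^sub>v y = 0\<^sub>v N" for y k
    using dep_lemma[OF vc that[unfolded Vm_def]] unfolding P_def Vm_def by blast
  obtain c where c: "c \<in> carrier_vec (Suc N)" "c \<noteq> 0\<^sub>v (Suc N)" "Vm (Suc N) *\<^sub>v c = 0\<^sub>v N"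
    using wide_kernel[OF Vmc, of "Suc N"] by auto
  obtain K where K: "K < Suc N" "P K" using dep[OF c] by blast
  define d where "d = (LEAST k. P k)"
  have Pd: "P d" unfolding d_def using K(2) by (rule LeastI)
  have dN: "d \<le> N" using Least_le[of P K] K unfolding d_def by simp
  have d0: "d \<noteq> 0"
  proof
    assume "d = 0"
    then obtain a where "a \<in> carrier_vec 0" "v 0 = Vm 0 *\<^sub>v a" using Pd unfolding P_def by auto
    then have "w = 0\<^sub>v N" unfolding Vm_def v_def using M w by (auto simp: vec_eq_iff scalar_prod_def)
    then show False using w by simp
  qed
  have indep: "y = 0\<^sub>v d" if yy: "y \<in> carrier_vec d" "Vm d *\<^sub>v y = 0\<^sub>v N" for y
  proof (rule ccontr)
    assume "y \<noteq> 0\<^sub>v d"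
    then obtain K' where "K' < d" "P K'" using dep[OF yy(1) _ yy(2)] by blast
    then show False using not_less_Least unfolding d_def by blast
  qed
  obtain a where a: "a \<in> carrier_vec d" "v d = Vm d *\<^sub>v a" using Pd unfolding P_def by auto
  define C where "C = mat d d (\<lambda>(i,j). if Suc j < d then (if i = Suc j then 1 else 0) else a $ i)"
  have Cc: "C \<in> carrier_mat d d" unfolding C_def by simp
  have MV: "M * Vm d = Vm d * C"
  proof (rule eq_matI)
    fix i j assume i: "i < dim_row (Vm d * C)" and j: "j < dim_col (Vm d * C)"
    then have i: "i < N" and j: "j < d" using Vmc[of d] Cc by auto
    have "(M * Vm d) $$ (i,j) = row M i \<bullet> v j" using i j M Vmc[of d] colVm[OF j] by simp
    also have "\<dots> = v (Suc j) $ i" using vSuc i M by simp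
    finally have L: "(M * Vm d) $$ (i,j) = v (Suc j) $ i" .
    have "(Vm d * C) $$ (i,j) = (\<Sum>l<d. v l $ i * C $$ (l,j))"
      using i j Vmc Cc unfolding Vm_def by (simp add: scalar_prod_def lessThan_atLeast0)
    also have "\<dots> = v (Suc j) $ i"
    proof (cases "Suc j < d")
      case True
      have "(\<Sum>l<d. v l $ i * C $$ (l,j)) = (\<Sum>l<d. if l = Suc j then v l $ i else 0)"
        by (rule sum.cong) (use True j in \<open>auto simp: C_def\<close>)
      also have "\<dots> = v (Suc j) $ i" using True by simp
      finally show ?thesis .
    next
      case False
      then have jd: "Suc j = d" using j by simp
      have "(\<Sum>l<d. v l $ i * C $$ (l,j)) = (\<Sum>l<d. v l $ i * a $ l)"
        by (rule sum.cong) (use False j in \<open>auto simp: C_def\<close>)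
      also have "\<dots> = (Vm d *\<^sub>v a) $ i"
        using i a(1) unfolding Vm_def by (simp add: mult_mat_vec_def scalar_prod_def row_def lessThan_atLeast0 mult.commute)
      also have "\<dots> = v (Suc j) $ i" using a(2) jd by simp
      finally show ?thesis .
    qed
    finally show "(M * Vm d) $$ (i,j) = (Vm d * C) $$ (i,j)" using L by simp
  qed (use M Vmc[of d] Cc in auto)
  obtain as where as: "char_poly C = (\<Prod>a\<leftarrow>as. [:- a, 1:])" "length as = d"
    using char_poly_factorized[OF Cc] by blast
  define \<mu> where "\<mu> = hd as"
  have "\<mu> \<in> set as" using as(2) d0 unfolding \<mu>_def by (cases as) auto
  then have "poly (char_poly C) \<mu> = 0" unfolding as(1) poly_prod_list_zero_iff by auto
  then have "eigenvalue C \<mu>" using eigenvalue_root_char_poly[OF Cc] by simp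
  then obtain y where y: "y \<in> carrier_vec d" "y \<noteq> 0\<^sub>v d" "C *\<^sub>v y = \<mu> \<cdot>\<^sub>v y"
    unfolding eigenvalue_def eigenvector_def using Cc by auto
  define u where "u = Vm d *\<^sub>v y"
  have uc: "u \<in> carrier_vec N" unfolding u_def using Vmc[of d] y by simp
  have u0: "u \<noteq> 0\<^sub>v N" using indep[OF y(1)] y(2) unfolding u_def by blast
  have "M *\<^sub>v u = (M * Vm d) *\<^sub>v y" unfolding u_def using M Vmc[of d] y by (simp add: assoc_mult_mat_vec)
  also have "\<dots> = Vm d *\<^sub>v (C *\<^sub>v y)" unfolding MV using Vmc[of d] Cc y by (simp add: assoc_mult_mat_vec)
  also have "\<dots> = \<mu> \<cdot>\<^sub>v u" unfolding u_def y(3) using Vmc[of d] y by (simp add: mult_mat_vec)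
  finally have Mu: "M *\<^sub>v u = \<mu> \<cdot>\<^sub>v u" .
  have BV: "Bt * Vm d = 0\<^sub>m p d"
  proof (rule eq_matI)
    fix r j assume r: "r < dim_row (0\<^sub>m p d :: complex mat)" and j: "j < dim_col (0\<^sub>m p d :: complex mat)"
    then have r: "r < p" and j: "j < d" by auto
    have "(Bt * Vm d) $$ (r,j) = (Bt *\<^sub>v v j) $ r" using r j Bt Vmc[of d] colVm[OF j] by simp
    also have "Bt *\<^sub>v v j = 0\<^sub>v p" using kal j dN unfolding v_def by simp
    finally show "(Bt * Vm d) $$ (r,j) = 0\<^sub>m p d $$ (r,j)" using r j by simp
  qed (use Bt Vmc[of d] in auto)
  have "Bt *\<^sub>v u = 0\<^sub>v p" unfolding u_def using Bt Vmc[of d] y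
    by (simp add: assoc_mult_mat_vec[symmetric] BV) (auto simp: vec_eq_iff scalar_prod_def)
  then show ?thesis using uc u0 Mu by blast
qed

definition KB :: "'a::field mat \<Rightarrow> 'a mat \<Rightarrow> bool" where
  "KB Mt Bt \<longleftrightarrow> (\<exists>w \<in> carrier_vec (dim_row Mt). w \<noteq> 0\<^sub>v (dim_row Mt) \<and>
      (\<forall>k < dim_row Mt. Bt *\<^sub>v (Mt ^\<^sub>m k *\<^sub>v w) = 0\<^sub>v (dim_row Bt)))"

definition EB :: "'a::field mat \<Rightarrow> 'a mat \<Rightarrow> bool" where
  "EB Mt Bt \<longleftrightarrow> (\<exists>\<mu> u. u \<in> carrier_vec (dim_row Mt) \<and> u \<noteq> 0\<^sub>v (dim_row Mt) \<and>
      Mt *\<^sub>v u = \<mu> \<cdot>\<^sub>v u \<and> Bt *\<^sub>v u = 0\<^sub>v (dim_row Bt))"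

lemma transpose_pow:
  fixes A :: "'a::comm_ring_1 mat"
  assumes A: "A \<in> carrier_mat n n"
  shows "transpose_mat (A ^\<^sub>m k) = (transpose_mat A) ^\<^sub>m k"
proof (induction k)
  case 0 then show ?case using A by simp
next
  case (Suc k)
  have "transpose_mat (A ^\<^sub>m Suc k) = transpose_mat A * transpose_mat (A ^\<^sub>m k)"
    using A by (simp add: transpose_mult[OF pow_carrier_mat[OF A] A])
  also have "\<dots> = (transpose_mat A) ^\<^sub>m Suc k"
    using Suc pow_mat_Suc_left[of "transpose_mat A" n k] A by simp
  finally show ?case .
qed

lemma hautus_easy:
  assumes M: "M \<in> carrier_mat N N" and Bt: "Bt \<in> carrier_mat p N" and e: "EB M Bt"
  shows "KB M Bt"
proof -
  obtain \<mu> u where u: "u \<in> carrier_vec N" "u \<noteq> 0\<^sub>v N" "M *\<^sub>v u = \<mu> \<cdot>\<^sub>v u" "Bt *\<^sub>v u = 0\<^sub>v p"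
    using e M Bt unfolding EB_def by auto
  have ev: "eigenvector M u \<mu>" unfolding eigenvector_def using u M by simp
  have "Bt *\<^sub>v (M ^\<^sub>m k *\<^sub>v u) = 0\<^sub>v p" for k
    using eigenvector_pow[OF M ev, of k] u Bt by (simp add: mult_mat_vec) (auto simp: vec_eq_iff)
  then show ?thesis unfolding KB_def using u M Bt by auto
qed

lemma hautus:
  fixes M :: "complex mat"
  assumes M: "M \<in> carrier_mat N N" and Bt: "Bt \<in> carrier_mat p N"
  shows "KB M Bt \<longleftrightarrow> EB M Bt"
  using hautus_easy[OF M Bt] hautus_hard[OF M Bt] M Bt unfolding KB_def EB_def by auto

lemma ctrb_LK:
  fixes A :: "'a::field mat"
  assumes A: "A \<in> carrier_mat N N" and B: "B \<in> carrier_mat N p"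
  shows "controllable A B \<longleftrightarrow> \<not> KB (transpose_mat A) (transpose_mat B)"
proof -
  define X where "X = ctrb_mat A B"
  have Xc: "X \<in> carrier_mat N (N * p)" unfolding X_def ctrb_mat_def Let_def using A B by simp
  have ent: "(transpose_mat X *\<^sub>v w) $ j = (transpose_mat B *\<^sub>v (transpose_mat A ^\<^sub>m (j div p) *\<^sub>v w)) $ (j mod p)"
    if w: "w \<in> carrier_vec N" and j: "j < N * p" for w j
  proof -
    have p0: "0 < p" using j by (cases p) auto
    have jm: "j mod p < p" using p0 by simp
    define k where "k = j div p"
    have "(transpose_mat X *\<^sub>v w) $ j = col X j \<bullet> w" using Xc j by simp
    also have "col X j = col (A ^\<^sub>m k * B) (j mod p)"
      using A B j jm unfolding X_def ctrb_mat_def Let_def k_def by (auto simp: vec_eq_iff)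
    also have "\<dots> \<bullet> w = (transpose_mat (A ^\<^sub>m k * B) *\<^sub>v w) $ (j mod p)"
      using A B jm by simp
    also have "transpose_mat (A ^\<^sub>m k * B) = transpose_mat B * transpose_mat A ^\<^sub>m k"
      using transpose_mult[OF pow_carrier_mat[OF A] B] transpose_pow[OF A] by simp
    also have "\<dots> *\<^sub>v w = transpose_mat B *\<^sub>v (transpose_mat A ^\<^sub>m k *\<^sub>v w)"
      using A B w by (simp add: assoc_mult_mat_vec[of _ p N _ N])
    finally show ?thesis unfolding k_def .
  qed
  have eqv: "transpose_mat X *\<^sub>v w = 0\<^sub>v (N * p) \<longleftrightarrow>
      (\<forall>k<N. transpose_mat B *\<^sub>v (transpose_mat A ^\<^sub>m k *\<^sub>v w) = 0\<^sub>v p)"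
    if w: "w \<in> carrier_vec N" for w
  proof
    assume z: "transpose_mat X *\<^sub>v w = 0\<^sub>v (N * p)"
    show "\<forall>k<N. transpose_mat B *\<^sub>v (transpose_mat A ^\<^sub>m k *\<^sub>v w) = 0\<^sub>v p"
    proof (intro allI impI eq_vecI)
      fix k i assume k: "k < N" and i: "i < dim_vec (0\<^sub>v p :: 'a vec)"
      then have i: "i < p" by simp
      have j: "k * p + i < N * p"
      proof -
        have "k * p + i < k * p + p" using i by simp
        also have "\<dots> = Suc k * p" by simp
        also have "\<dots> \<le> N * p" using k by (intro mult_right_mono) auto
        finally show ?thesis .
      qed
      have "(k * p + i) div p = k" "(k * p + i) mod p = i" using i by auto
      then show "(transpose_mat B *\<^sub>v (transpose_mat A ^\<^sub>m k *\<^sub>v w)) $ i = 0\<^sub>v p $ i"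
        using ent[OF w j] z j i by (metis index_zero_vec(1))
    qed (use B in simp)
  next
    assume z: "\<forall>k<N. transpose_mat B *\<^sub>v (transpose_mat A ^\<^sub>m k *\<^sub>v w) = 0\<^sub>v p"
    show "transpose_mat X *\<^sub>v w = 0\<^sub>v (N * p)"
    proof (rule eq_vecI)
      fix j assume "j < dim_vec (0\<^sub>v (N * p) :: 'a vec)"
      then have j: "j < N * p" by simp
      have p0: "0 < p" using j by (cases p) auto
      have "j div p < N" using j p0 by (simp add: div_less_iff_less_mult)
      then show "(transpose_mat X *\<^sub>v w) $ j = 0\<^sub>v (N * p) $ j"
        using ent[OF w j] z j p0 by simp
    qed (use Xc in simp)
  qed
  have "controllable A B \<longleftrightarrow> LK X"
    unfolding controllable_def X_def[symmetric] using rank_full_iff_LK[OF Xc] A by simp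
  also have "\<dots> \<longleftrightarrow> \<not> KB (transpose_mat A) (transpose_mat B)"
    unfolding LK_def KB_def using Xc A B eqv by auto
  finally show ?thesis .
qed

lemma minv_props:
  fixes A :: "'a::field mat"
  assumes A: "A \<in> carrier_mat n n" and inj: "\<forall>v \<in> carrier_vec n. A *\<^sub>v v = 0\<^sub>v n \<longrightarrow> v = 0\<^sub>v n"
  shows "minv A \<in> carrier_mat n n \<and> A * minv A = 1\<^sub>m n \<and> minv A * A = 1\<^sub>m n"
proof -
  have "det A \<noteq> 0" using det_0_iff_vec_prod_zero_field[OF A] inj by auto
  then have ex: "\<exists>X. X \<in> carrier_mat n n \<and> A * X = 1\<^sub>m n \<and> X * A = 1\<^sub>m n"
    using det_non_zero_imp_unit[OF A] unfolding Units_def ring_mat_def by auto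
  have dr: "dim_row A = n" using A by simp
  show ?thesis unfolding minv_def dr using someI_ex[OF ex] by simp
qed

lemma Re_mult_mat_vec:
  fixes X :: "real mat" and w :: "complex vec"
  assumes X: "X \<in> carrier_mat r N" and w: "w \<in> carrier_vec N"
  shows "map_vec Re (map_mat complex_of_real X *\<^sub>v w) = X *\<^sub>v map_vec Re w"
    and "map_vec Im (map_mat complex_of_real X *\<^sub>v w) = X *\<^sub>v map_vec Im w"
  using X w by (auto simp: vec_eq_iff scalar_prod_def Re_sum Im_sum)

lemma realify:
  fixes M Bt :: "real mat"
  assumes M: "M \<in> carrier_mat N N" and Bt: "Bt \<in> carrier_mat p N"
  shows "KB (map_mat complex_of_real M) (map_mat complex_of_real Bt) \<longleftrightarrow> KB M Bt"
proof
  assume "KB (map_mat complex_of_real M) (map_mat complex_of_real Bt)"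
  then obtain w where w: "w \<in> carrier_vec N" "w \<noteq> 0\<^sub>v N"
    and k: "\<forall>k<N. map_mat complex_of_real Bt *\<^sub>v (map_mat complex_of_real M ^\<^sub>m k *\<^sub>v w) = 0\<^sub>v p"
    unfolding KB_def using M Bt by auto
  have hk: "map_mat complex_of_real Bt *\<^sub>v (map_mat complex_of_real M ^\<^sub>m k *\<^sub>v w)
      = map_mat complex_of_real (Bt * M ^\<^sub>m k) *\<^sub>v w" for k
    using M Bt w
    by (simp add: of_real_hom.mat_hom_pow[OF M] of_real_hom.mat_hom_mult[OF Bt pow_carrier_mat[OF M]]
        assoc_mult_mat_vec[of _ p N _ N])
  have re: "Bt *\<^sub>v (M ^\<^sub>m k *\<^sub>v map_vec f w) = map_vec f (map_mat complex_of_real Bt *\<^sub>v (map_mat complex_of_real M ^\<^sub>m k *\<^sub>v w))"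
    if f: "f = Re \<or> f = Im" for k f
  proof -
    have "Bt *\<^sub>v (M ^\<^sub>m k *\<^sub>v map_vec f w) = (Bt * M ^\<^sub>m k) *\<^sub>v map_vec f w"
      using M Bt w by (simp add: assoc_mult_mat_vec[of _ p N _ N])
    also have "\<dots> = map_vec f (map_mat complex_of_real (Bt * M ^\<^sub>m k) *\<^sub>v w)"
      using f Re_mult_mat_vec[OF mult_carrier_mat[OF Bt pow_carrier_mat[OF M]] w(1)] by auto
    finally show ?thesis unfolding hk .
  qed
  have z: "Bt *\<^sub>v (M ^\<^sub>m k *\<^sub>v map_vec f w) = 0\<^sub>v p" if "k < N" "f = Re \<or> f = Im" for k f
    using re[OF that(2), of k] k that by (auto simp: vec_eq_iff)
  have "map_vec Re w \<noteq> 0\<^sub>v N \<or> map_vec Im w \<noteq> 0\<^sub>v N"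
  proof (rule ccontr)
    assume "\<not> ?thesis"
    then have "w = 0\<^sub>v N" using w(1) by (auto simp: vec_eq_iff complex_eq_iff)
    then show False using w by simp
  qed
  then show "KB M Bt" unfolding KB_def using z w M Bt
    by (metis carrier_matD(1) map_carrier_vec)
next
  assume "KB M Bt"
  then obtain w where w: "w \<in> carrier_vec N" "w \<noteq> 0\<^sub>v N"
    and k: "\<forall>k<N. Bt *\<^sub>v (M ^\<^sub>m k *\<^sub>v w) = 0\<^sub>v p"
    unfolding KB_def using M Bt by auto
  have "map_mat complex_of_real Bt *\<^sub>v (map_mat complex_of_real M ^\<^sub>m k *\<^sub>v map_vec complex_of_real w)
      = map_vec complex_of_real (Bt *\<^sub>v (M ^\<^sub>m k *\<^sub>v w))" for k
    using M Bt w
    by (simp add: of_real_hom.mat_hom_pow[OF M, symmetric]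
        of_real_hom.mult_mat_vec_hom[OF pow_carrier_mat[OF M] w(1), symmetric]
        of_real_hom.mult_mat_vec_hom[OF Bt mult_mat_vec_carrier[OF pow_carrier_mat[OF M] w(1)], symmetric])
  then have z: "\<forall>k<N. map_mat complex_of_real Bt *\<^sub>v (map_mat complex_of_real M ^\<^sub>m k *\<^sub>v map_vec complex_of_real w) = 0\<^sub>v p"
    using k by auto
  have nz: "map_vec complex_of_real w \<noteq> 0\<^sub>v N" using w by (auto simp: vec_eq_iff)
  show "KB (map_mat complex_of_real M) (map_mat complex_of_real Bt)"
    unfolding KB_def using z w M Bt nz by (auto intro!: bexI[of _ "map_vec complex_of_real w"])
qed

definition SOB :: "'a::field mat \<Rightarrow> 'a mat \<Rightarrow> 'a mat \<Rightarrow> bool" where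
  "SOB M G B \<longleftrightarrow> (\<exists>\<mu> y. y \<in> carrier_vec (dim_row M) \<and> y \<noteq> 0\<^sub>v (dim_row M) \<and>
     transpose_mat (\<mu>\<^sup>2 \<cdot>\<^sub>m M + G) *\<^sub>v y = 0\<^sub>v (dim_row M) \<and> transpose_mat B *\<^sub>v y = 0\<^sub>v (dim_col B))"

lemma transpose_smult: "transpose_mat (a \<cdot>\<^sub>m A) = a \<cdot>\<^sub>m transpose_mat A"
  by (rule eq_matI) auto

lemma smult_mat_mult_vec: "dim_vec v = dim_col A \<Longrightarrow> (a \<cdot>\<^sub>m A) *\<^sub>v v = a \<cdot>\<^sub>v (A *\<^sub>v v)"
  by (rule eq_vecI) (auto simp: scalar_prod_def sum_distrib_left ac_simps)

lemma smult_append: "a \<cdot>\<^sub>v (v @\<^sub>v w) = (a \<cdot>\<^sub>v v) @\<^sub>v (a \<cdot>\<^sub>v w)"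
  by (rule eq_vecI) auto

lemma col_vcat: "X \<in> carrier_mat n1 p \<Longrightarrow> Y \<in> carrier_mat n2 p \<Longrightarrow> j < p \<Longrightarrow>
   col (vcat X Y) j = col X j @\<^sub>v col Y j"
  unfolding vcat_def by (rule eq_vecI) auto

lemma vcat_T:
  assumes X: "X \<in> carrier_mat n1 p" and Y: "Y \<in> carrier_mat n2 p"
    and w1: "w1 \<in> carrier_vec n1" and w2: "w2 \<in> carrier_vec n2"
  shows "transpose_mat (vcat X Y) *\<^sub>v (w1 @\<^sub>v w2) = transpose_mat X *\<^sub>v w1 + transpose_mat Y *\<^sub>v w2"
proof (rule eq_vecI)
  fix j assume "j < dim_vec (transpose_mat X *\<^sub>v w1 + transpose_mat Y *\<^sub>v w2)"
  then have j: "j < p" using X Y by simp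
  have "(transpose_mat (vcat X Y) *\<^sub>v (w1 @\<^sub>v w2)) $ j = col (vcat X Y) j \<bullet> (w1 @\<^sub>v w2)"
    using j X Y unfolding vcat_def by simp
  also have "\<dots> = col X j \<bullet> w1 + col Y j \<bullet> w2"
    unfolding col_vcat[OF X Y j] using X Y w1 w2 j by (intro scalar_prod_append) auto
  finally show "(transpose_mat (vcat X Y) *\<^sub>v (w1 @\<^sub>v w2)) $ j = (transpose_mat X *\<^sub>v w1 + transpose_mat Y *\<^sub>v w2) $ j"
    using j X Y by simp
qed (use X Y in \<open>simp add: vcat_def\<close>)

lemma vcat_carrier: "X \<in> carrier_mat n1 p \<Longrightarrow> Y \<in> carrier_mat n2 p \<Longrightarrow> vcat X Y \<in> carrier_mat (n1 + n2) p"
  unfolding vcat_def by simp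

lemma hcat_T_zero:
  assumes X: "X \<in> carrier_mat n c1" and Y: "Y \<in> carrier_mat n c2" and y: "y \<in> carrier_vec n"
  shows "transpose_mat (hcat X Y) *\<^sub>v y = 0\<^sub>v (c1 + c2) \<longleftrightarrow>
     transpose_mat X *\<^sub>v y = 0\<^sub>v c1 \<and> transpose_mat Y *\<^sub>v y = 0\<^sub>v c2"
proof -
  have e: "(transpose_mat (hcat X Y) *\<^sub>v y) $ j = (if j < c1 then col X j \<bullet> y else col Y (j - c1) \<bullet> y)"
    if j: "j < c1 + c2" for j
  proof -
    have "col (hcat X Y) j = (if j < c1 then col X j else col Y (j - c1))"
      using X Y j unfolding hcat_def by (auto simp: vec_eq_iff)
    then show ?thesis using X Y j unfolding hcat_def by simp
  qed
  show ?thesis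
  proof
    assume z: "transpose_mat (hcat X Y) *\<^sub>v y = 0\<^sub>v (c1 + c2)"
    have a: "col X j \<bullet> y = 0" if "j < c1" for j
      using e[of j] z that by (metis add.commute index_zero_vec(1) trans_less_add2)
    have b: "col Y j \<bullet> y = 0" if "j < c2" for j
      using e[of "j + c1"] z that by (metis add.commute add_less_cancel_left add_diff_cancel_right' index_zero_vec(1) not_add_less2)
    show "transpose_mat X *\<^sub>v y = 0\<^sub>v c1 \<and> transpose_mat Y *\<^sub>v y = 0\<^sub>v c2"
      using a b X Y by (auto simp: vec_eq_iff)
  next
    assume z: "transpose_mat X *\<^sub>v y = 0\<^sub>v c1 \<and> transpose_mat Y *\<^sub>v y = 0\<^sub>v c2"
    then have a: "col X j \<bullet> y = 0" if "j < c1" for j using that X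
      by (metis index_mult_mat_vec index_transpose_mat(2) index_zero_vec(1) row_transpose carrier_matD(2))
    have b: "col Y j \<bullet> y = 0" if "j < c2" for j using that Y z
      by (metis index_mult_mat_vec index_transpose_mat(2) index_zero_vec(1) row_transpose carrier_matD(2))
    show "transpose_mat (hcat X Y) *\<^sub>v y = 0\<^sub>v (c1 + c2)"
    proof (rule eq_vecI)
      fix j assume "j < dim_vec (0\<^sub>v (c1 + c2) :: 'a vec)"
      then have j: "j < c1 + c2" by simp
      show "(transpose_mat (hcat X Y) *\<^sub>v y) $ j = 0\<^sub>v (c1 + c2) $ j"
        using e[OF j] a b j by auto
    qed (use X Y in \<open>simp add: hcat_def\<close>)
  qed
qed

lemma first_order_eig:
  fixes M Mi G B :: "'a::field mat"
  assumes M: "M \<in> carrier_mat N N" and Mi: "Mi \<in> carrier_mat N N" and G: "G \<in> carrier_mat N N"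
    and B: "B \<in> carrier_mat N p"
    and MiM: "Mi * M = 1\<^sub>m N" and MMi: "M * Mi = 1\<^sub>m N"
  shows "EB (transpose_mat (four_block_mat (0\<^sub>m N N) (1\<^sub>m N) (- (Mi * G)) (0\<^sub>m N N)))
            (transpose_mat (vcat (0\<^sub>m N p) (Mi * B))) \<longleftrightarrow> SOB M G B"
proof -
  define F where "F = Mi * G"
  define H where "H = Mi * B"
  have Fc: "F \<in> carrier_mat N N" and Hc: "H \<in> carrier_mat N p" unfolding F_def H_def using Mi G B by auto
  define At where "At = transpose_mat (four_block_mat (0\<^sub>m N N) (1\<^sub>m N) (- F) (0\<^sub>m N N))"
  define Bvt where "Bvt = transpose_mat (vcat (0\<^sub>m N p) H)"
  have At_eq: "At = four_block_mat (0\<^sub>m N N) (transpose_mat (- F)) (1\<^sub>m N) (0\<^sub>m N N)"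
    unfolding At_def using Fc by (subst transpose_four_block_mat) auto
  have Atc: "At \<in> carrier_mat (N + N) (N + N)" unfolding At_eq using Fc by auto
  have Bvtc: "Bvt \<in> carrier_mat p (N + N)" unfolding Bvt_def using Hc vcat_carrier[of "0\<^sub>m N p" N p H N] by auto
  have At_mult: "At *\<^sub>v (w1 @\<^sub>v w2) = (- (transpose_mat F *\<^sub>v w2)) @\<^sub>v w1"
    if w1: "w1 \<in> carrier_vec N" and w2: "w2 \<in> carrier_vec N" for w1 w2
  proof -
    have "At *\<^sub>v (w1 @\<^sub>v w2) = (0\<^sub>m N N *\<^sub>v w1 + transpose_mat (- F) *\<^sub>v w2) @\<^sub>v (1\<^sub>m N *\<^sub>v w1 + 0\<^sub>m N N *\<^sub>v w2)"
      unfolding At_eq by (rule four_block_mat_mult_vec) (use Fc w1 w2 in auto)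
    also have "\<dots> = (- (transpose_mat F *\<^sub>v w2)) @\<^sub>v w1"
      using Fc w1 w2 by (auto simp: transpose_uminus uminus_mult_mat_vec)
    finally show ?thesis .
  qed
  have Bv_mult: "Bvt *\<^sub>v (w1 @\<^sub>v w2) = transpose_mat H *\<^sub>v w2"
    if w1: "w1 \<in> carrier_vec N" and w2: "w2 \<in> carrier_vec N" for w1 w2
  proof -
    have z: "0\<^sub>m p N *\<^sub>v w1 = 0\<^sub>v p" using w1 by (auto simp: vec_eq_iff)
    show ?thesis
      unfolding Bvt_def using vcat_T[of "0\<^sub>m N p" N p H N w1 w2] Hc w1 w2 z by simp
  qed
  have TF: "transpose_mat F = transpose_mat G * transpose_mat Mi" unfolding F_def using Mi G by (simp add: transpose_mult)
  have TH: "transpose_mat H = transpose_mat B * transpose_mat Mi" unfolding H_def using Mi B by (simp add: transpose_mult)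
  have T1: "transpose_mat M * transpose_mat Mi = 1\<^sub>m N"
    using transpose_mult[OF Mi M] MiM by simp
  have T2: "transpose_mat Mi * transpose_mat M = 1\<^sub>m N"
    using transpose_mult[OF M Mi] MMi by simp
  have TK: "transpose_mat (\<mu>\<^sup>2 \<cdot>\<^sub>m M + G) *\<^sub>v y = \<mu>\<^sup>2 \<cdot>\<^sub>v (transpose_mat M *\<^sub>v y) + transpose_mat G *\<^sub>v y"
    if y: "y \<in> carrier_vec N" for \<mu> y
  proof -
    have "transpose_mat (\<mu>\<^sup>2 \<cdot>\<^sub>m M + G) = \<mu>\<^sup>2 \<cdot>\<^sub>m transpose_mat M + transpose_mat G"
      using transpose_add[of "\<mu>\<^sup>2 \<cdot>\<^sub>m M" N N G] M G by (simp add: transpose_smult)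
    also have "\<dots> *\<^sub>v y = (\<mu>\<^sup>2 \<cdot>\<^sub>m transpose_mat M) *\<^sub>v y + transpose_mat G *\<^sub>v y"
      using M G y by (intro add_mult_distrib_mat_vec[of _ N N]) auto
    finally show ?thesis using M y by (simp add: smult_mat_mult_vec)
  qed
  have TMTMi: "transpose_mat M *\<^sub>v (transpose_mat Mi *\<^sub>v v) = v" if "v \<in> carrier_vec N" for v
    using that M Mi T1 by (simp add: assoc_mult_mat_vec[symmetric, of _ N N _ N])
  have TMiTM: "transpose_mat Mi *\<^sub>v (transpose_mat M *\<^sub>v v) = v" if "v \<in> carrier_vec N" for v
    using that M Mi T2 by (simp add: assoc_mult_mat_vec[symmetric, of _ N N _ N])
  have TGTMi: "transpose_mat G *\<^sub>v (transpose_mat Mi *\<^sub>v v) = transpose_mat F *\<^sub>v v" if "v \<in> carrier_vec N" for v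
    using that G Mi TF by (simp add: assoc_mult_mat_vec[of _ N N _ N])
  have TBTMi: "transpose_mat B *\<^sub>v (transpose_mat Mi *\<^sub>v v) = transpose_mat H *\<^sub>v v" if "v \<in> carrier_vec N" for v
    using that B Mi TH by (simp add: assoc_mult_mat_vec[of _ p N _ N])
  have mz: "X *\<^sub>v 0\<^sub>v N = 0\<^sub>v (dim_row X)" if "X \<in> carrier_mat r N" for X r
    using that by (auto simp: vec_eq_iff scalar_prod_def)
  have "EB At Bvt \<longleftrightarrow> SOB M G B"
  proof
    assume "EB At Bvt"
    then obtain \<mu> u where u: "u \<in> carrier_vec (N + N)" "u \<noteq> 0\<^sub>v (N + N)" "At *\<^sub>v u = \<mu> \<cdot>\<^sub>v u" "Bvt *\<^sub>v u = 0\<^sub>v p"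
      unfolding EB_def using Atc Bvtc by auto
    define w1 where "w1 = vec_first u N"
    define w2 where "w2 = vec_last u N"
    have w1c: "w1 \<in> carrier_vec N" and w2c: "w2 \<in> carrier_vec N" unfolding w1_def w2_def by auto
    have uw: "u = w1 @\<^sub>v w2" unfolding w1_def w2_def using u(1) by simp
    have "(- (transpose_mat F *\<^sub>v w2)) @\<^sub>v w1 = (\<mu> \<cdot>\<^sub>v w1) @\<^sub>v (\<mu> \<cdot>\<^sub>v w2)"
      using u(3) At_mult[OF w1c w2c] unfolding uw smult_append by simp
    then have e1: "- (transpose_mat F *\<^sub>v w2) = \<mu> \<cdot>\<^sub>v w1" and e2: "w1 = \<mu> \<cdot>\<^sub>v w2"
      using append_vec_eq[of "- (transpose_mat F *\<^sub>v w2)" N "\<mu> \<cdot>\<^sub>v w1"] Fc w1c w2c by auto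
    have e3: "transpose_mat H *\<^sub>v w2 = 0\<^sub>v p" using u(4) Bv_mult[OF w1c w2c] uw by simp
    define y where "y = transpose_mat Mi *\<^sub>v w2"
    have yc: "y \<in> carrier_vec N" unfolding y_def using Mi w2c by simp
    have y0: "y \<noteq> 0\<^sub>v N"
    proof
      assume "y = 0\<^sub>v N"
      then have "w2 = 0\<^sub>v N" using TMTMi[OF w2c] M mz[of "transpose_mat M"] unfolding y_def by simp
      then have "u = 0\<^sub>v (N + N)" using uw e2 by (auto simp: vec_eq_iff)
      then show False using u(2) by simp
    qed
    have "transpose_mat (\<mu>\<^sup>2 \<cdot>\<^sub>m M + G) *\<^sub>v y = \<mu>\<^sup>2 \<cdot>\<^sub>v w2 + transpose_mat F *\<^sub>v w2"
      unfolding TK[OF yc] unfolding y_def TMTMi[OF w2c] TGTMi[OF w2c] ..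
    also have "\<dots> = 0\<^sub>v N"
    proof -
      have "transpose_mat F *\<^sub>v w2 = - (\<mu> \<cdot>\<^sub>v (\<mu> \<cdot>\<^sub>v w2))" using e1 e2
        by (metis uminus_uminus_vec)
      then show ?thesis using w2c by (auto simp: vec_eq_iff power2_eq_square)
    qed
    finally have k1: "transpose_mat (\<mu>\<^sup>2 \<cdot>\<^sub>m M + G) *\<^sub>v y = 0\<^sub>v N" .
    have k2: "transpose_mat B *\<^sub>v y = 0\<^sub>v p" unfolding y_def TBTMi[OF w2c] e3 ..
    show "SOB M G B" unfolding SOB_def using M B yc y0 k1 k2 by auto
  next
    assume "SOB M G B"
    then obtain \<mu> y where y: "y \<in> carrier_vec N" "y \<noteq> 0\<^sub>v N" "transpose_mat (\<mu>\<^sup>2 \<cdot>\<^sub>m M + G) *\<^sub>v y = 0\<^sub>v N"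
      "transpose_mat B *\<^sub>v y = 0\<^sub>v p"
      unfolding SOB_def using M B by auto
    define w2 where "w2 = transpose_mat M *\<^sub>v y"
    define w1 where "w1 = \<mu> \<cdot>\<^sub>v w2"
    have w2c: "w2 \<in> carrier_vec N" and w1c: "w1 \<in> carrier_vec N" unfolding w1_def w2_def using M y by auto
    have yw: "transpose_mat Mi *\<^sub>v w2 = y" unfolding w2_def using TMiTM[OF y(1)] .
    have TFw: "transpose_mat F *\<^sub>v w2 = transpose_mat G *\<^sub>v y" using TGTMi[OF w2c] yw by simp
    have TGy: "transpose_mat G *\<^sub>v y = - (\<mu>\<^sup>2 \<cdot>\<^sub>v w2)"
    proof -
      have "\<mu>\<^sup>2 \<cdot>\<^sub>v w2 + transpose_mat G *\<^sub>v y = 0\<^sub>v N" using TK[OF y(1), of \<mu>] y(3) unfolding w2_def by simp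
      then show ?thesis using w2c G y(1) by (auto simp: vec_eq_iff) (metis add.commute add_eq_0_iff)
    qed
    define u where "u = w1 @\<^sub>v w2"
    have uc: "u \<in> carrier_vec (N + N)" unfolding u_def using w1c w2c by simp
    have w20: "w2 \<noteq> 0\<^sub>v N"
    proof
      assume "w2 = 0\<^sub>v N"
      then have "y = 0\<^sub>v N" using yw Mi mz[of "transpose_mat Mi"] by simp
      then show False using y(2) by simp
    qed
    have u0: "u \<noteq> 0\<^sub>v (N + N)"
    proof
      assume "u = 0\<^sub>v (N + N)"
      then have "u = 0\<^sub>v N @\<^sub>v 0\<^sub>v N" by (auto simp: vec_eq_iff)
      then have "w2 = 0\<^sub>v N" unfolding u_def using append_vec_eq[OF w1c] by auto
      then show False using w20 by simp
    qed
    have "At *\<^sub>v u = (- (transpose_mat F *\<^sub>v w2)) @\<^sub>v w1" unfolding u_def by (rule At_mult[OF w1c w2c])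
    also have "\<dots> = \<mu> \<cdot>\<^sub>v u"
    proof -
      have "- (transpose_mat F *\<^sub>v w2) = \<mu> \<cdot>\<^sub>v w1" unfolding TFw TGy w1_def
        using w2c by (auto simp: vec_eq_iff power2_eq_square)
      then show ?thesis unfolding u_def smult_append w1_def by simp
    qed
    finally have k1: "At *\<^sub>v u = \<mu> \<cdot>\<^sub>v u" .
    have k2: "Bvt *\<^sub>v u = 0\<^sub>v p" unfolding u_def Bv_mult[OF w1c w2c]
      using TBTMi[OF w2c] yw y(4) by simp
    show "EB At Bvt" unfolding EB_def using Atc Bvtc uc u0 k1 k2 by auto
  qed
  then show ?thesis unfolding At_def Bvt_def F_def H_def .
qed

lemma map_vcat: "dim_col Y = dim_col X \<Longrightarrow> map_mat f (vcat X Y) = vcat (map_mat f X) (map_mat f Y)"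
  unfolding vcat_def by (rule eq_matI) auto

lemma so_iff:
  fixes M G B :: "real mat"
  assumes M: "M \<in> carrier_mat N N" and G: "G \<in> carrier_mat N N" and B: "B \<in> carrier_mat N p"
    and inj: "\<forall>v \<in> carrier_vec N. M *\<^sub>v v = 0\<^sub>v N \<longrightarrow> v = 0\<^sub>v N"
  shows "so_controllable M G B \<longleftrightarrow>
    \<not> SOB (map_mat complex_of_real M) (map_mat complex_of_real G) (map_mat complex_of_real B)"
proof -
  define Mi where "Mi = minv M"
  have Mi: "Mi \<in> carrier_mat N N" and MMi: "M * Mi = 1\<^sub>m N" and MiM: "Mi * M = 1\<^sub>m N"
    using minv_props[OF M inj] unfolding Mi_def by auto
  define A where "A = four_block_mat (0\<^sub>m N N) (1\<^sub>m N) (- (Mi * G)) (0\<^sub>m N N)"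
  define Bv where "Bv = vcat (0\<^sub>m N p) (Mi * B)"
  have Ac: "A \<in> carrier_mat (N + N) (N + N)" unfolding A_def using Mi G by auto
  have Bvc: "Bv \<in> carrier_mat (N + N) p" unfolding Bv_def using Mi B vcat_carrier[of "0\<^sub>m N p" N p "Mi * B" N] by auto
  have "so_controllable M G B = controllable A Bv"
    unfolding so_controllable_def A_def Bv_def Mi_def using M B by simp
  also have "\<dots> \<longleftrightarrow> \<not> KB (transpose_mat A) (transpose_mat Bv)" by (rule ctrb_LK[OF Ac Bvc])
  also have "\<dots> \<longleftrightarrow> \<not> KB (map_mat complex_of_real (transpose_mat A)) (map_mat complex_of_real (transpose_mat Bv))"
    using realify[of "transpose_mat A" "N + N" "transpose_mat Bv" p] Ac Bvc by simp
  also have "\<dots> \<longleftrightarrow> \<not> EB (map_mat complex_of_real (transpose_mat A)) (map_mat complex_of_real (transpose_mat Bv))"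
    using hautus[of "map_mat complex_of_real (transpose_mat A)" "N + N" "map_mat complex_of_real (transpose_mat Bv)" p] Ac Bvc by simp
  also have "\<dots> \<longleftrightarrow> \<not> SOB (map_mat complex_of_real M) (map_mat complex_of_real G) (map_mat complex_of_real B)"
  proof -
    let ?c = "map_mat complex_of_real"
    have eA: "?c (transpose_mat A) = transpose_mat (four_block_mat (0\<^sub>m N N) (1\<^sub>m N) (- (?c Mi * ?c G)) (0\<^sub>m N N))"
    proof -
      have z: "?c (0\<^sub>m N N) = 0\<^sub>m N N" by (rule eq_matI) auto
      have o: "?c (1\<^sub>m N) = 1\<^sub>m N" by (rule eq_matI) auto
      have u: "?c (- (Mi * G)) = - (?c (Mi * G))" by (rule eq_matI) auto
      show ?thesis
        unfolding map_mat_transpose[symmetric] A_def using Mi G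
        by (simp add: map_four_block_mat[of _ N N _ N _ N] z o u of_real_hom.mat_hom_mult[OF Mi G])
    qed
    have eB: "?c (transpose_mat Bv) = transpose_mat (vcat (0\<^sub>m N p) (?c Mi * ?c B))"
    proof -
      have z: "?c (0\<^sub>m N p) = 0\<^sub>m N p" by (rule eq_matI) auto
      show ?thesis
        unfolding map_mat_transpose[symmetric] Bv_def using Mi B
        by (subst map_vcat) (auto simp: z of_real_hom.mat_hom_mult[OF Mi B])
    qed
    have o: "?c (1\<^sub>m N) = 1\<^sub>m N" by (rule eq_matI) auto
    have c1: "?c Mi * ?c M = 1\<^sub>m N" using of_real_hom.mat_hom_mult[OF Mi M] MiM o by metis
    have c2: "?c M * ?c Mi = 1\<^sub>m N" using of_real_hom.mat_hom_mult[OF M Mi] MMi o by metis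
    show ?thesis unfolding eA eB
      using first_order_eig[of "?c M" N "?c Mi" "?c G" "?c B" p] M Mi G B c1 c2 by simp
  qed
  finally show ?thesis .
qed

lemma dims:
  shows Mxx_c: "Mxx n m mm \<in> carrier_mat 2 2"
    and Mxq_c: "Mxq n mm l s \<in> carrier_mat 2 (2 * n)"
    and Mqx_c: "Mqx n mm l s \<in> carrier_mat (2 * n) 2"
    and Mqq_c: "Mqq n mm l s \<in> carrier_mat (2 * n) (2 * n)"
    and Gqq_c: "Gqq n mm l s g \<in> carrier_mat (2 * n) (2 * n)"
    and Mlin_c: "Mlin n m mm l s \<in> carrier_mat (2 + 2 * n) (2 + 2 * n)"
    and Glin_c: "Glin n mm l s g \<in> carrier_mat (2 + 2 * n) (2 + 2 * n)"
    and Blin_c: "Blin n \<in> carrier_mat (2 + 2 * n) 2"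
  by (auto simp: Mxx_def Mxq_def Mqx_def Mqq_def Gqq_def Mlin_def Glin_def Blin_def vcat_def)

lemma pos_def_inj:
  assumes pd: "pos_def A" and A: "A \<in> carrier_mat N N"
  shows "\<forall>v \<in> carrier_vec N. A *\<^sub>v v = 0\<^sub>v N \<longrightarrow> v = 0\<^sub>v N"
proof (intro ballI impI)
  fix v :: "real vec" assume v: "v \<in> carrier_vec N" and z: "A *\<^sub>v v = 0\<^sub>v N"
  show "v = 0\<^sub>v N"
  proof (rule ccontr)
    assume "v \<noteq> 0\<^sub>v N"
    then have "v \<bullet> (A *\<^sub>v v) > 0" using pd v A unfolding pos_def_def by auto
    then show False using z v by simp
  qed
qed

lemma Mqq_inj:
  assumes pd: "pos_def (Mlin n m mm l s)"
  shows "\<forall>v \<in> carrier_vec (2 * n). Mqq n mm l s *\<^sub>v v = 0\<^sub>v (2 * n) \<longrightarrow> v = 0\<^sub>v (2 * n)"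
proof (intro ballI impI)
  fix v :: "real vec" assume v: "v \<in> carrier_vec (2 * n)" and z: "Mqq n mm l s *\<^sub>v v = 0\<^sub>v (2 * n)"
  note dd = Mxx_c[of n m mm] Mxq_c[of n mm l s] Mqx_c[of n mm l s] Mqq_c[of n mm l s] Mlin_c[of n m mm l s]
  define x where "x = 0\<^sub>v 2 @\<^sub>v v"
  have xc: "x \<in> carrier_vec (2 + 2 * n)" unfolding x_def using v append_carrier_vec[of "0\<^sub>v 2" 2 v "2 * n"] by simp
  have z2: "Mxx n m mm *\<^sub>v 0\<^sub>v 2 = 0\<^sub>v 2" "Mqx n mm l s *\<^sub>v 0\<^sub>v 2 = 0\<^sub>v (2 * n)"
    using Mxx_c[of n m mm] Mqx_c[of n mm l s] by (auto simp: vec_eq_iff scalar_prod_def)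
  have "Mlin n m mm l s *\<^sub>v x = (Mxx n m mm *\<^sub>v 0\<^sub>v 2 + Mxq n mm l s *\<^sub>v v) @\<^sub>v (Mqx n mm l s *\<^sub>v 0\<^sub>v 2 + Mqq n mm l s *\<^sub>v v)"
    unfolding Mlin_def x_def by (rule four_block_mat_mult_vec) (use dd v in auto)
  also have "\<dots> = (Mxq n mm l s *\<^sub>v v) @\<^sub>v 0\<^sub>v (2 * n)" unfolding z2 z using dd v by simp
  finally have Mx: "Mlin n m mm l s *\<^sub>v x = (Mxq n mm l s *\<^sub>v v) @\<^sub>v 0\<^sub>v (2 * n)" .
  have "x \<bullet> (Mlin n m mm l s *\<^sub>v x) = 0\<^sub>v 2 \<bullet> (Mxq n mm l s *\<^sub>v v) + v \<bullet> 0\<^sub>v (2 * n)"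
    unfolding Mx unfolding x_def by (rule scalar_prod_append[of _ 2 _ "2 * n"]) (use dd v in auto)
  also have "\<dots> = 0" using v dd by simp
  finally have "x \<bullet> (Mlin n m mm l s *\<^sub>v x) = 0" .
  then have "x = 0\<^sub>v (2 + 2 * n)" using pd xc dd unfolding pos_def_def
    by (metis carrier_matD(1) less_irrefl)
  then have "0\<^sub>v 2 @\<^sub>v v = 0\<^sub>v 2 @\<^sub>v 0\<^sub>v (2 * n)" unfolding x_def by (auto simp: vec_eq_iff)
  then show "v = 0\<^sub>v (2 * n)" using append_vec_eq[of "0\<^sub>v 2" 2 "0\<^sub>v 2"] by auto
qed

lemma Gqq_diag:
  assumes "g > 0" and "\<forall>i\<in>{1..n}. mm i > 0" and "\<forall>i\<in>{1..n}. l i > 0"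
    and "\<forall>i\<in>{1..n}. s i = 1 \<or> s i = -1" and r: "r < 2 * n"
  shows "Gqq n mm l s g $$ (r, r) \<noteq> 0"
proof -
  define i where "i = r div 2 + 1"
  have i: "i \<in> {1..n}" unfolding i_def using r by auto
  have "msum n mm i > 0" unfolding msum_def using i assms(2)
    by (intro sum_pos) auto
  moreover have "s i \<noteq> 0" using i assms(4) by force
  moreover have "l i > 0" using i assms(3) by blast
  moreover have "Gqq n mm l s g $$ (r, r) = s i * msum n mm i * g * l i"
    unfolding Gqq_def i_def using r by simp
  ultimately show ?thesis using assms(1) by simp
qed

lemma fb_T_mult:
  fixes A :: "'a::field mat"
  assumes A: "A \<in> carrier_mat k k" and Bq: "Bq \<in> carrier_mat k q" and C: "C \<in> carrier_mat q k"
    and D: "D \<in> carrier_mat q q" and y: "yq \<in> carrier_vec q"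
  shows "transpose_mat (four_block_mat A Bq C D) *\<^sub>v (0\<^sub>v k @\<^sub>v yq) = (transpose_mat C *\<^sub>v yq) @\<^sub>v (transpose_mat D *\<^sub>v yq)"
proof -
  have z1: "transpose_mat A *\<^sub>v 0\<^sub>v k = 0\<^sub>v k" "transpose_mat Bq *\<^sub>v 0\<^sub>v k = 0\<^sub>v q"
    using A Bq by (auto simp: vec_eq_iff scalar_prod_def)
  have "transpose_mat (four_block_mat A Bq C D) *\<^sub>v (0\<^sub>v k @\<^sub>v yq) =
     (transpose_mat A *\<^sub>v 0\<^sub>v k + transpose_mat C *\<^sub>v yq) @\<^sub>v (transpose_mat Bq *\<^sub>v 0\<^sub>v k + transpose_mat D *\<^sub>v yq)"
    using A Bq C D y by (subst transpose_four_block_mat[OF A Bq C D], intro four_block_mat_mult_vec) auto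
  also have "\<dots> = (transpose_mat C *\<^sub>v yq) @\<^sub>v (transpose_mat D *\<^sub>v yq)"
    unfolding z1 using C D y by simp
  finally show ?thesis .
qed

lemma block_equiv:
  assumes Gd: "\<forall>r < 2 * n. Gqq n mm l s g $$ (r, r) \<noteq> 0"
  shows "SOB (map_mat complex_of_real (Mlin n m mm l s)) (map_mat complex_of_real (Glin n mm l s g))
             (map_mat complex_of_real (Blin n))
     \<longleftrightarrow> SOB (map_mat complex_of_real (Mqq n mm l s)) (map_mat complex_of_real (Gqq n mm l s g))
             (map_mat complex_of_real (Mqx n mm l s))"
proof -
  let ?c = "map_mat complex_of_real"
  let ?q = "2 * n"
  note dd = Mxx_c[of n m mm] Mxq_c[of n mm l s] Mqx_c[of n mm l s] Mqq_c[of n mm l s] Mlin_c[of n m mm l s]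
    Gqq_c[of n mm l s g] Glin_c[of n mm l s g] Blin_c[of n]
  have K: "\<mu>\<^sup>2 \<cdot>\<^sub>m ?c (Mlin n m mm l s) + ?c (Glin n mm l s g) =
     four_block_mat (\<mu>\<^sup>2 \<cdot>\<^sub>m ?c (Mxx n m mm)) (\<mu>\<^sup>2 \<cdot>\<^sub>m ?c (Mxq n mm l s)) (\<mu>\<^sup>2 \<cdot>\<^sub>m ?c (Mqx n mm l s))
       (\<mu>\<^sup>2 \<cdot>\<^sub>m ?c (Mqq n mm l s) + ?c (Gqq n mm l s g))" for \<mu>
    using dd by (intro eq_matI) (auto simp: Mlin_def Glin_def)
  have Kc: "\<mu>\<^sup>2 \<cdot>\<^sub>m ?c (Mlin n m mm l s) + ?c (Glin n mm l s g) \<in> carrier_mat (2 + ?q) (2 + ?q)" for \<mu>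
    using dd by simp
  have TK: "transpose_mat (\<mu>\<^sup>2 \<cdot>\<^sub>m ?c (Mlin n m mm l s) + ?c (Glin n mm l s g)) *\<^sub>v (0\<^sub>v 2 @\<^sub>v yq)
     = (\<mu>\<^sup>2 \<cdot>\<^sub>v (transpose_mat (?c (Mqx n mm l s)) *\<^sub>v yq)) @\<^sub>v
       (transpose_mat (\<mu>\<^sup>2 \<cdot>\<^sub>m ?c (Mqq n mm l s) + ?c (Gqq n mm l s g)) *\<^sub>v yq)"
    if yq: "yq \<in> carrier_vec ?q" for \<mu> yq
    unfolding K using dd yq
    by (subst fb_T_mult[of _ 2 _ ?q]) (auto simp: transpose_smult smult_mat_mult_vec)
  have cB: "?c (Blin n) = vcat (1\<^sub>m 2) (0\<^sub>m ?q 2)"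
  proof -
    have o: "?c (1\<^sub>m 2) = 1\<^sub>m 2" by (rule eq_matI) auto
    have z: "?c (0\<^sub>m ?q 2) = 0\<^sub>m ?q 2" by (rule eq_matI) auto
    show ?thesis unfolding Blin_def by (subst map_vcat) (auto simp: o z)
  qed
  have TB: "transpose_mat (?c (Blin n)) *\<^sub>v (y0 @\<^sub>v yq) = y0"
    if y0: "y0 \<in> carrier_vec 2" and yq: "yq \<in> carrier_vec ?q" for y0 yq
  proof -
    have z: "transpose_mat (0\<^sub>m ?q 2) *\<^sub>v yq = 0\<^sub>v 2" using yq by (auto simp: vec_eq_iff scalar_prod_def)
    show ?thesis unfolding cB using vcat_T[of "1\<^sub>m 2" 2 2 "0\<^sub>m ?q 2" ?q y0 yq] y0 yq z by simp
  qed
  have Gz: "yq = 0\<^sub>v ?q" if yq: "yq \<in> carrier_vec ?q" and z: "transpose_mat (?c (Gqq n mm l s g)) *\<^sub>v yq = 0\<^sub>v ?q" for yq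
  proof (rule eq_vecI)
    fix r assume "r < dim_vec (0\<^sub>v ?q :: complex vec)"
    then have r: "r < ?q" by simp
    have "(transpose_mat (?c (Gqq n mm l s g)) *\<^sub>v yq) $ r = (\<Sum>i<?q. (if i = r then complex_of_real (Gqq n mm l s g $$ (r, r)) else 0) * yq $ i)"
      using r yq by (auto simp: Gqq_def lessThan_atLeast0 scalar_prod_def intro!: sum.cong)
    also have "\<dots> = complex_of_real (Gqq n mm l s g $$ (r, r)) * yq $ r" using r by (simp add: if_distrib[of "\<lambda>x. x * _"] cong: if_cong)
    finally have "complex_of_real (Gqq n mm l s g $$ (r, r)) * yq $ r = 0" using z r by simp
    then show "yq $ r = 0\<^sub>v ?q $ r" using Gd r by simp
  qed (use yq in simp)
  have dr: "dim_row (?c (Mlin n m mm l s)) = 2 + ?q" "dim_row (?c (Mqq n mm l s)) = ?q"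
    "dim_col (?c (Blin n)) = 2" "dim_col (?c (Mqx n mm l s)) = 2" using dd by auto
  have z0: "(0\<^sub>v (2 + ?q) :: complex vec) = 0\<^sub>v 2 @\<^sub>v 0\<^sub>v ?q" by (rule eq_vecI) auto
  have sz: "\<mu>\<^sup>2 \<cdot>\<^sub>v (0\<^sub>v 2 :: complex vec) = 0\<^sub>v 2" for \<mu> by (rule eq_vecI) auto
  show ?thesis
  proof
    assume "SOB (?c (Mlin n m mm l s)) (?c (Glin n mm l s g)) (?c (Blin n))"
    then obtain \<mu> y where y: "y \<in> carrier_vec (2 + ?q)" "y \<noteq> 0\<^sub>v (2 + ?q)"
      "transpose_mat (\<mu>\<^sup>2 \<cdot>\<^sub>m ?c (Mlin n m mm l s) + ?c (Glin n mm l s g)) *\<^sub>v y = 0\<^sub>v (2 + ?q)"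
      "transpose_mat (?c (Blin n)) *\<^sub>v y = 0\<^sub>v 2"
      unfolding SOB_def dr by auto
    define y0 where "y0 = vec_first y 2"
    define yq where "yq = vec_last y ?q"
    have y0c: "y0 \<in> carrier_vec 2" and yqc: "yq \<in> carrier_vec ?q" unfolding y0_def yq_def by auto
    have yy: "y = y0 @\<^sub>v yq" unfolding y0_def yq_def using y(1) by simp
    have y00: "y0 = 0\<^sub>v 2" using TB[OF y0c yqc] y(4) yy by simp
    have yy2: "y = 0\<^sub>v 2 @\<^sub>v yq" using yy y00 by simp
    have yq0: "yq \<noteq> 0\<^sub>v ?q"
    proof
      assume "yq = 0\<^sub>v ?q"
      then have "y = 0\<^sub>v (2 + ?q)" using yy2 by (auto simp: vec_eq_iff)
      then show False using y(2) by simp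
    qed
    have "(\<mu>\<^sup>2 \<cdot>\<^sub>v (transpose_mat (?c (Mqx n mm l s)) *\<^sub>v yq)) @\<^sub>v
       (transpose_mat (\<mu>\<^sup>2 \<cdot>\<^sub>m ?c (Mqq n mm l s) + ?c (Gqq n mm l s g)) *\<^sub>v yq) = 0\<^sub>v 2 @\<^sub>v 0\<^sub>v ?q"
      using y(3) TK[OF yqc, of \<mu>] yy2 z0 by simp
    note eqa = this
    have a: "\<mu>\<^sup>2 \<cdot>\<^sub>v (transpose_mat (?c (Mqx n mm l s)) *\<^sub>v yq) = 0\<^sub>v 2"
      and b: "transpose_mat (\<mu>\<^sup>2 \<cdot>\<^sub>m ?c (Mqq n mm l s) + ?c (Gqq n mm l s g)) *\<^sub>v yq = 0\<^sub>v ?q"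
    proof -
      have car: "\<mu>\<^sup>2 \<cdot>\<^sub>v (transpose_mat (?c (Mqx n mm l s)) *\<^sub>v yq) \<in> carrier_vec 2" using dd yqc by simp
      show "\<mu>\<^sup>2 \<cdot>\<^sub>v (transpose_mat (?c (Mqx n mm l s)) *\<^sub>v yq) = 0\<^sub>v 2"
        "transpose_mat (\<mu>\<^sup>2 \<cdot>\<^sub>m ?c (Mqq n mm l s) + ?c (Gqq n mm l s g)) *\<^sub>v yq = 0\<^sub>v ?q"
        using append_vec_eq[OF car zero_carrier_vec] eqa by auto
    qed
    have \<mu>0: "\<mu> \<noteq> 0"
    proof
      assume "\<mu> = 0"
      then have "\<mu>\<^sup>2 \<cdot>\<^sub>m ?c (Mqq n mm l s) + ?c (Gqq n mm l s g) = ?c (Gqq n mm l s g)"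
        using dd by (intro eq_matI) auto
      then show False using Gz[OF yqc] b yq0 by simp
    qed
    have c: "transpose_mat (?c (Mqx n mm l s)) *\<^sub>v yq = 0\<^sub>v 2"
    proof -
      have "\<mu>\<^sup>2 \<noteq> 0" using \<mu>0 by simp
      then show ?thesis using a dd by (auto simp: vec_eq_iff)
    qed
    show "SOB (?c (Mqq n mm l s)) (?c (Gqq n mm l s g)) (?c (Mqx n mm l s))"
      unfolding SOB_def dr using yqc yq0 b c by blast
  next
    assume "SOB (?c (Mqq n mm l s)) (?c (Gqq n mm l s g)) (?c (Mqx n mm l s))"
    then obtain \<mu> yq where yq: "yq \<in> carrier_vec ?q" "yq \<noteq> 0\<^sub>v ?q"
      "transpose_mat (\<mu>\<^sup>2 \<cdot>\<^sub>m ?c (Mqq n mm l s) + ?c (Gqq n mm l s g)) *\<^sub>v yq = 0\<^sub>v ?q"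
      "transpose_mat (?c (Mqx n mm l s)) *\<^sub>v yq = 0\<^sub>v 2"
      unfolding SOB_def dr by auto
    define y where "y = 0\<^sub>v 2 @\<^sub>v yq"
    have yc: "y \<in> carrier_vec (2 + ?q)" unfolding y_def using yq(1) append_carrier_vec[of "0\<^sub>v 2" 2 yq ?q] by simp
    have y0: "y \<noteq> 0\<^sub>v (2 + ?q)" unfolding y_def using yq(1,2) by (auto simp: vec_eq_iff)
    have k1: "transpose_mat (\<mu>\<^sup>2 \<cdot>\<^sub>m ?c (Mlin n m mm l s) + ?c (Glin n mm l s g)) *\<^sub>v y = 0\<^sub>v (2 + ?q)"
      unfolding y_def TK[OF yq(1)] yq(3) yq(4) sz z0 ..
    have k2: "transpose_mat (?c (Blin n)) *\<^sub>v y = 0\<^sub>v 2" unfolding y_def using TB[of "0\<^sub>v 2" yq] yq(1) by simp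
    show "SOB (?c (Mlin n m mm l s)) (?c (Glin n mm l s g)) (?c (Blin n))"
      unfolding SOB_def dr using yc y0 k1 k2 by blast
  qed
qed

theorem proposition3:
  fixes n :: nat and m g :: real and mm l s :: "nat \<Rightarrow> real"
  assumes "n \<ge> 1" and "m > 0" and "g > 0"
    and "\<forall>i\<in>{1..n}. mm i > 0" and "\<forall>i\<in>{1..n}. l i > 0"
    and "\<forall>i\<in>{1..n}. s i = 1 \<or> s i = -1"
    and "pos_def (Mlin n m mm l s)"
  shows "(so_controllable (Mlin n m mm l s) (Glin n mm l s g) (Blin n)
            \<longleftrightarrow> so_controllable (Mqq n mm l s) (Gqq n mm l s g) (Mqx n mm l s))
       \<and> (so_controllable (Mlin n m mm l s) (Glin n mm l s g) (Blin n)
            \<longleftrightarrow> (\<forall>z::complex.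
                   mrank (hcat ((z\<^sup>2) \<cdot>\<^sub>m map_mat complex_of_real (Mqq n mm l s)
                                  + map_mat complex_of_real (Gqq n mm l s g))
                               (map_mat complex_of_real (Mqx n mm l s))) = 2 * n))"
proof -
  let ?c = "map_mat complex_of_real"
  have injL: "\<forall>v \<in> carrier_vec (2 + 2 * n). Mlin n m mm l s *\<^sub>v v = 0\<^sub>v (2 + 2 * n) \<longrightarrow> v = 0\<^sub>v (2 + 2 * n)"
    by (rule pos_def_inj[OF assms(7) Mlin_c])
  have injQ: "\<forall>v \<in> carrier_vec (2 * n). Mqq n mm l s *\<^sub>v v = 0\<^sub>v (2 * n) \<longrightarrow> v = 0\<^sub>v (2 * n)"
    by (rule Mqq_inj[OF assms(7)])
  have Gd: "\<forall>r < 2 * n. Gqq n mm l s g $$ (r, r) \<noteq> 0"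
    using Gqq_diag[OF assms(3,4,5,6)] by blast
  have full: "so_controllable (Mlin n m mm l s) (Glin n mm l s g) (Blin n) \<longleftrightarrow>
      \<not> SOB (?c (Mlin n m mm l s)) (?c (Glin n mm l s g)) (?c (Blin n))"
    by (rule so_iff[OF Mlin_c Glin_c Blin_c injL])
  have sub: "so_controllable (Mqq n mm l s) (Gqq n mm l s g) (Mqx n mm l s) \<longleftrightarrow>
      \<not> SOB (?c (Mqq n mm l s)) (?c (Gqq n mm l s g)) (?c (Mqx n mm l s))"
    by (rule so_iff[OF Mqq_c Gqq_c Mqx_c injQ])
  have blk: "SOB (?c (Mlin n m mm l s)) (?c (Glin n mm l s g)) (?c (Blin n)) \<longleftrightarrow>
      SOB (?c (Mqq n mm l s)) (?c (Gqq n mm l s g)) (?c (Mqx n mm l s))"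
    by (rule block_equiv[OF Gd])
  have rk1: "mrank (hcat ((z\<^sup>2) \<cdot>\<^sub>m ?c (Mqq n mm l s) + ?c (Gqq n mm l s g)) (?c (Mqx n mm l s))) = 2 * n
      \<longleftrightarrow> (\<forall>y \<in> carrier_vec (2 * n). transpose_mat ((z\<^sup>2) \<cdot>\<^sub>m ?c (Mqq n mm l s) + ?c (Gqq n mm l s g)) *\<^sub>v y = 0\<^sub>v (2 * n)
             \<and> transpose_mat (?c (Mqx n mm l s)) *\<^sub>v y = 0\<^sub>v 2 \<longrightarrow> y = 0\<^sub>v (2 * n))" for z
  proof -
    let ?X = "(z\<^sup>2) \<cdot>\<^sub>m ?c (Mqq n mm l s) + ?c (Gqq n mm l s g)"
    let ?Y = "?c (Mqx n mm l s)"
    have Xc: "?X \<in> carrier_mat (2 * n) (2 * n)" using Mqq_c Gqq_c by simp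
    have Yc: "?Y \<in> carrier_mat (2 * n) 2" using Mqx_c by simp
    have Hc: "hcat ?X ?Y \<in> carrier_mat (2 * n) (2 * n + 2)" using Xc Yc Gqq_c[of n mm l s g] unfolding hcat_def by simp
    show ?thesis unfolding rank_full_iff_LK[OF Hc] LK_def
      using Hc hcat_T_zero[OF Xc Yc] by auto
  qed
  have rk: "(\<forall>z::complex. mrank (hcat ((z\<^sup>2) \<cdot>\<^sub>m ?c (Mqq n mm l s) + ?c (Gqq n mm l s g)) (?c (Mqx n mm l s))) = 2 * n)
      \<longleftrightarrow> \<not> SOB (?c (Mqq n mm l s)) (?c (Gqq n mm l s g)) (?c (Mqx n mm l s))"
    unfolding rk1 SOB_def using Mqq_c[of n mm l s] Mqx_c[of n mm l s] by auto
  show ?thesis using full sub blk rk by blast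
qed

end
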